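(* Let $\{x^k\}$ be generated by the MPG algorithm described in the context, and suppose that for each $j=1,\ldots,m$ the gradient $\nabla G_j$ is Lipschitz continuous with constant $L_j>0$. Then for every $k$ at which the step size $t_k$ is computed, $t_k\ge t_{\min}:=\min\{1,\tau_1\gamma/L_{\max}\}$, where $L_{\max}:=\max_{j=1,\ldots,m}L_j$.
   Context: Let $F:\mathbb{R}^n\to(\mathbb{R}\cup\{+\infty\})^m$, $F=(F_1,\ldots,F_m)$, with $F_j=G_j+H_j$ for $j=1,\ldots,m$, where: (i) each $G_j:\mathbb{R}^n\to\mathbb{R}$ is continuously differentiable and convex; (ii) each $H_j:\mathbb{R}^n\to\mathbb{R}\cup\{+\infty\}$ is proper, convex and continuous on its domain; (iii) $\mathrm{dom}(F):=\{x: F_j(x)<+\infty\ \forall j\}$ is nonempty and closed. For $u,v\in\mathbb{R}^m$, $u\preceq v$ means $u_j\le v_j$ for all $j$. For $x\in\mathrm{dom}(F)$ and $\alpha>0$ define $\psi_x(u):=\max_{j=1,\ldots,m}\big(\nabla G_j(x)^\top(u-x)+H_j(u)-H_j(x)\big)$, $p_\alpha(x):=\arg\min_{u\in\mathbb{R}^n}\psi_x(u)+\frac{1}{2\alpha}\|u-x\|^2$ (unique minimizer), and $\theta_\alpha(x):=\psi_x(p_\alpha(x))+\frac{1}{2\alpha}\|p_\alpha(x)-x\|^2$. MPG algorithm. Step 0: choose $x^0\in\mathrm{dom}(F)$, $\alpha>0$, $\gamma\in(0,2/\alpha)$, $0<\tau_1<\tau_2<1$; set $k=0$. Step 1: compute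 $p^k:=p_\alpha(x^k)$ and $\theta_\alpha(x^k)$. Step 2: if $\theta_\alpha(x^k)=0$, stop. Step 3: set $d^k:=p^k-x^k$, take $j_k^*\in\arg\max_{j}\nabla G_j(x^k)^\top d^k$, set $t=1$. Step 3.1: if $G_{j_k^*}(x^k+td^k)\le G_{j_k^*}(x^k)+t\nabla G_{j_k^*}(x^k)^\top d^k+t\frac{\gamma}{2}\|d^k\|^2$, go to Step 3.2; otherwise replace $t$ by some value in $[\tau_1 t,\tau_2 t]$ and repeat Step 3.1. Step 3.2: if $F(x^k+td^k)\preceq F(x^k)$, set $t_k=t$ and go to Step 4. Step 3.3: replace $t$ by some value in $[\tau_1 t,\tau_2 t]$; if $G_j(x^k+td^k)\le G_j(x^k)+t\nabla G_j(x^k)^\top d^k+t\frac{\gamma}{2}\|d^k\|^2$ for all $j=1,\ldots,m$, set $t_k=t$ and go to Step 4; otherwise repeat Step 3.3. Step 4: $x^{k+1}:=x^k+t_kd^k$, $k\leftarrow k+1$, go to Step 1. *)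

theory Defs
  imports "HOL-Analysis.Analysis" "HOL-Library.Extended_Real"
begin

text \<open>Extended-valued functions R^n -> R \<union> {+\<infinity>} are modelled as functions into ereal
  that never take the value -\<infinity>.\<close>

definition ext_convex :: "('a::real_vector \<Rightarrow> ereal) \<Rightarrow> bool" where
  "ext_convex h \<longleftrightarrow> (\<forall>x y (l::real). 0 < l \<and> l < 1 \<longrightarrow>
      h (l *\<^sub>R x + (1 - l) *\<^sub>R y) \<le> ereal l * h x + ereal (1 - l) * h y)"

definition ext_proper :: "('a \<Rightarrow> ereal) \<Rightarrow> bool" where
  "ext_proper h \<longleftrightarrow> (\<exists>x. h x \<noteq> \<infinity>) \<and> (\<forall>x. h x \<noteq> -\<infinity>)"

definition edom :: "('a \<Rightarrow> ereal) \<Rightarrow> 'a set" where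
  "edom h = {x. h x < \<infinity>}"

definition Fval :: "(nat \<Rightarrow> 'a \<Rightarrow> real) \<Rightarrow> (nat \<Rightarrow> 'a \<Rightarrow> ereal) \<Rightarrow> nat \<Rightarrow> 'a \<Rightarrow> ereal" where
  "Fval G H j x = ereal (G j x) + H j x"

definition domF :: "nat \<Rightarrow> (nat \<Rightarrow> 'a \<Rightarrow> real) \<Rightarrow> (nat \<Rightarrow> 'a \<Rightarrow> ereal) \<Rightarrow> 'a set" where
  "domF m G H = {x. \<forall>j\<in>{1..m}. Fval G H j x < \<infinity>}"

definition F_le :: "nat \<Rightarrow> (nat \<Rightarrow> 'a \<Rightarrow> real) \<Rightarrow> (nat \<Rightarrow> 'a \<Rightarrow> ereal) \<Rightarrow> 'a \<Rightarrow> 'a \<Rightarrow> bool" where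
  "F_le m G H y x \<longleftrightarrow> (\<forall>j\<in>{1..m}. Fval G H j y \<le> Fval G H j x)"

definition psi :: "nat \<Rightarrow> (nat \<Rightarrow> 'a::real_inner \<Rightarrow> 'a) \<Rightarrow> (nat \<Rightarrow> 'a \<Rightarrow> ereal) \<Rightarrow> 'a \<Rightarrow> 'a \<Rightarrow> ereal" where
  "psi m gradG H x u = Max ((\<lambda>j. ereal (gradG j x \<bullet> (u - x)) + H j u - H j x) ` {1..m})"

definition prox_obj :: "nat \<Rightarrow> (nat \<Rightarrow> 'a::real_inner \<Rightarrow> 'a) \<Rightarrow> (nat \<Rightarrow> 'a \<Rightarrow> ereal) \<Rightarrow> real \<Rightarrow> 'a \<Rightarrow> 'a \<Rightarrow> ereal" where
  "prox_obj m gradG H \<alpha> x u = psi m gradG H x u + ereal (1 / (2 * \<alpha>) * (norm (u - x))\<^sup>2)"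

definition p_alpha :: "nat \<Rightarrow> (nat \<Rightarrow> 'a::real_inner \<Rightarrow> 'a) \<Rightarrow> (nat \<Rightarrow> 'a \<Rightarrow> ereal) \<Rightarrow> real \<Rightarrow> 'a \<Rightarrow> 'a" where
  "p_alpha m gradG H \<alpha> x = (THE u. \<forall>v. prox_obj m gradG H \<alpha> x u \<le> prox_obj m gradG H \<alpha> x v)"

definition theta_alpha :: "nat \<Rightarrow> (nat \<Rightarrow> 'a::real_inner \<Rightarrow> 'a) \<Rightarrow> (nat \<Rightarrow> 'a \<Rightarrow> ereal) \<Rightarrow> real \<Rightarrow> 'a \<Rightarrow> ereal" where
  "theta_alpha m gradG H \<alpha> x = prox_obj m gradG H \<alpha> x (p_alpha m gradG H \<alpha> x)"

definition descent_test :: "(nat \<Rightarrow> 'a::real_inner \<Rightarrow> real) \<Rightarrow> (nat \<Rightarrow> 'a \<Rightarrow> 'a) \<Rightarrow> real \<Rightarrow> nat \<Rightarrow> 'a \<Rightarrow> 'a \<Rightarrow> real \<Rightarrow> bool" where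
  "descent_test G gradG \<gamma> j x d t \<longleftrightarrow>
     G j (x + t *\<^sub>R d) \<le> G j x + t * (gradG j x \<bullet> d) + t * (\<gamma> / 2) * (norm d)\<^sup>2"

text \<open>Backtracking loop: "if P t, stop with t; otherwise replace t by some value in
  [tau1 t, tau2 t] and repeat".  backtrack P tau1 tau2 t s means: starting the loop at the
  trial value t, some terminating run of the loop ends with the value s.\<close>
inductive backtrack :: "(real \<Rightarrow> bool) \<Rightarrow> real \<Rightarrow> real \<Rightarrow> real \<Rightarrow> real \<Rightarrow> bool"
  for P :: "real \<Rightarrow> bool" and \<tau>1 \<tau>2 :: real where
  stop: "P t \<Longrightarrow> backtrack P \<tau>1 \<tau>2 t t"
| shrink: "\<not> P t \<Longrightarrow> \<tau>1 * t \<le> t' \<Longrightarrow> t' \<le> \<tau>2 * t \<Longrightarrow> backtrack P \<tau>1 \<tau>2 t' s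
            \<Longrightarrow> backtrack P \<tau>1 \<tau>2 t s"

text \<open>Step 3 of MPG at the current iterate x: tk is a step size that some run of
  Step 3 (with some admissible choice of j_k^* and of the reduced trial values) returns.\<close>
definition mpg_step3 :: "nat \<Rightarrow> (nat \<Rightarrow> 'a::real_inner \<Rightarrow> real) \<Rightarrow> (nat \<Rightarrow> 'a \<Rightarrow> 'a) \<Rightarrow>
    (nat \<Rightarrow> 'a \<Rightarrow> ereal) \<Rightarrow> real \<Rightarrow> real \<Rightarrow> real \<Rightarrow> real \<Rightarrow> 'a \<Rightarrow> real \<Rightarrow> bool" where
  "mpg_step3 m G gradG H \<alpha> \<gamma> \<tau>1 \<tau>2 x tk \<longleftrightarrow>
    (let d = p_alpha m gradG H \<alpha> x - x in
     \<exists>js\<in>{1..m}. (\<forall>j\<in>{1..m}. gradG j x \<bullet> d \<le> gradG js x \<bullet> d) \<and>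
       (\<exists>s. backtrack (descent_test G gradG \<gamma> js x d) \<tau>1 \<tau>2 1 s \<and>
          ((F_le m G H (x + s *\<^sub>R d) x \<and> tk = s) \<or>
           (\<not> F_le m G H (x + s *\<^sub>R d) x \<and>
            (\<exists>t'. \<tau>1 * s \<le> t' \<and> t' \<le> \<tau>2 * s \<and>
               backtrack (\<lambda>t. \<forall>j\<in>{1..m}. descent_test G gradG \<gamma> j x d t) \<tau>1 \<tau>2 t' tk)))))"

end

theory Submission
  imports Defs
begin

lemma backtrack_bound:
  assumes "backtrack P \<tau>1 \<tau>2 t s" "0 < \<tau>1" "\<tau>2 < 1" "\<tau>1 \<le> \<tau>2"
    and "\<And>r. 0 < r \<Longrightarrow> r \<le> c \<Longrightarrow> P r" and "0 < t"
  shows "min t (\<tau>1 * c) \<le> s \<and> 0 < s \<and> s \<le> t \<and> P s"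
  using assms
proof (induction rule: backtrack.induct)
  case (stop t)
  then show ?case by auto
next
  case (shrink t t' s)
  have "0 < t'" using shrink by (metis mult_pos_pos order_less_le_trans)
  then have IH: "min t' (\<tau>1 * c) \<le> s \<and> 0 < s \<and> s \<le> t' \<and> P s" using shrink by blast
  have "c < t" using shrink by force
  then have "\<tau>1 * c \<le> \<tau>1 * t" using shrink by simp
  moreover have "\<tau>2 * t \<le> 1 * t" using shrink by (intro mult_right_mono) auto
  then have "t' \<le> t" using shrink(3) by simp
  ultimately have "\<tau>1 * c \<le> t'" "t' \<le> t" using shrink(2,3) by auto
  then have "\<tau>1 * c \<le> s" using IH by linarith
  then show ?case using IH \<open>t' \<le> t\<close> by auto
qed

lemma descent_lip:
  fixes G :: "'a::real_inner \<Rightarrow> real"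
  assumes grad: "\<And>y. (G has_derivative (\<lambda>h. g y \<bullet> h)) (at y)"
    and lip: "\<And>y z. norm (g y - g z) \<le> L * norm (y - z)"
    and t: "0 \<le> t"
  shows "G (x + t *\<^sub>R d) \<le> G x + t * (g x \<bullet> d) + L * t^2 / 2 * (norm d)^2"
proof -
  define h where "h s = G (x + s *\<^sub>R d) - G x - s * (g x \<bullet> d) - L * s^2 / 2 * (norm d)^2" for s
  have D: "(h has_real_derivative ((g (x + s *\<^sub>R d) - g x) \<bullet> d - L * s * (norm d)^2)) (at s)" for s
  proof -
    have "((\<lambda>s. x + s *\<^sub>R d) has_derivative (\<lambda>r. r *\<^sub>R d)) (at s)"
      by (auto intro!: derivative_eq_intros)
    from has_derivative_compose[OF this grad]
    have "((\<lambda>s. G (x + s *\<^sub>R d)) has_derivative (\<lambda>r. g (x + s *\<^sub>R d) \<bullet> (r *\<^sub>R d))) (at s)" .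
    then have "((\<lambda>s. G (x + s *\<^sub>R d)) has_real_derivative (g (x + s *\<^sub>R d) \<bullet> d)) (at s)"
      by (simp add: has_real_derivative_iff_has_vector_derivative has_vector_derivative_def mult.commute)
    then show ?thesis unfolding h_def
      by (auto intro!: derivative_eq_intros simp: inner_diff_left power2_eq_square algebra_simps)
  qed
  have "h t \<le> h 0"
  proof (rule DERIV_nonpos_imp_nonincreasing[OF t])
    fix s assume s: "0 \<le> s" "s \<le> t"
    have "(g (x + s *\<^sub>R d) - g x) \<bullet> d \<le> norm (g (x + s *\<^sub>R d) - g x) * norm d"
      by (rule norm_cauchy_schwarz)
    also have "\<dots> \<le> L * norm (s *\<^sub>R d) * norm d"
      using lip[of "x + s *\<^sub>R d" x] by (simp add: mult_right_mono)
    also have "\<dots> = L * s * (norm d)^2" using s by (simp add: power2_eq_square)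
    finally show "\<exists>y. (h has_real_derivative y) (at s) \<and> y \<le> 0" using D by fastforce
  qed
  then show ?thesis unfolding h_def by simp
qed


lemma continuous_on_Max_fam:
  fixes f :: "nat \<Rightarrow> 'a::topological_space \<Rightarrow> real"
  assumes "finite A" "A \<noteq> {}" "\<And>j. j \<in> A \<Longrightarrow> continuous_on S (f j)"
  shows "continuous_on S (\<lambda>u. Max ((\<lambda>j. f j u) ` A))"
  using assms
proof (induction A rule: finite_ne_induct)
  case (singleton x)
  then show ?case by simp
next
  case (insert a A)
  have "continuous_on S (\<lambda>u. max (f a u) (Max ((\<lambda>j. f j u) ` A)))"
    using insert by (intro continuous_on_max) auto
  then show ?case using insert by simp
qed

locale prox_setup =
  fixes m :: nat and gradG :: "nat \<Rightarrow> 'a::euclidean_space \<Rightarrow> 'a" and H :: "nat \<Rightarrow> 'a \<Rightarrow> ereal"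
    and \<alpha> :: real and x :: 'a
  assumes m_pos: "1 \<le> m"
    and H_proper: "\<And>j. j \<in> {1..m} \<Longrightarrow> ext_proper (H j)"
    and H_convex: "\<And>j. j \<in> {1..m} \<Longrightarrow> ext_convex (H j)"
    and H_cont: "\<And>j. j \<in> {1..m} \<Longrightarrow> continuous_on (edom (H j)) (H j)"
    and D_closed: "closed {u. \<forall>j\<in>{1..m}. H j u < \<infinity>}"
    and x_in: "x \<in> {u. \<forall>j\<in>{1..m}. H j u < \<infinity>}"
    and alpha_pos: "\<alpha> > 0"
begin

definition D where "D = {u. \<forall>j\<in>{1..m}. H j u < \<infinity>}"
definition hr where "hr j u = real_of_ereal (H j u)"
definition tm where "tm j u = gradG j x \<bullet> (u - x) + hr j u - hr j x"
definition psr where "psr u = Max ((\<lambda>j. tm j u) ` {1..m})"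
definition phr where "phr u = psr u + 1 / (2 * \<alpha>) * (norm (u - x))\<^sup>2"

lemma xD: "x \<in> D" using x_in D_def by simp

lemma Hfin: "u \<in> D \<Longrightarrow> j \<in> {1..m} \<Longrightarrow> H j u = ereal (hr j u)"
  using H_proper[of j] unfolding D_def hr_def ext_proper_def
  by (cases "H j u") auto

lemma ne: "{1..m} \<noteq> {}" "finite {1..m}" using m_pos by auto

lemma tm_le_psr: "j \<in> {1..m} \<Longrightarrow> tm j u \<le> psr u"
  unfolding psr_def by (rule Max_ge) auto

lemma prox_in: assumes "u \<in> D" shows "prox_obj m gradG H \<alpha> x u = ereal (phr u)"
proof -
  have "(\<lambda>j. ereal (gradG j x \<bullet> (u - x)) + H j u - H j x) ` {1..m} = ereal ` ((\<lambda>j. tm j u) ` {1..m})"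
    unfolding image_image
    by (rule image_cong) (auto simp: Hfin[OF assms] Hfin[OF xD] tm_def)
  moreover have "ereal (psr u) = Max (ereal ` ((\<lambda>j. tm j u) ` {1..m}))"
    unfolding psr_def using m_pos by (intro mono_Max_commute) (auto simp: mono_def)
  ultimately have "psi m gradG H x u = ereal (psr u)"
    unfolding psi_def by simp
  then show ?thesis unfolding prox_obj_def phr_def by simp
qed

lemma prox_out: assumes "u \<notin> D" shows "prox_obj m gradG H \<alpha> x u = \<infinity>"
proof -
  obtain j where j: "j \<in> {1..m}" "\<not> H j u < \<infinity>" using assms D_def by auto
  then have "H j u = \<infinity>" by simp
  then have "ereal (gradG j x \<bullet> (u - x)) + H j u - H j x = \<infinity>"
    using Hfin[OF xD j(1)] by simp
  then have "\<infinity> \<le> psi m gradG H x u" unfolding psi_def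
    using j(1) ne by (metis (no_types, lifting) Max_ge finite_imageI imageI)
  then show ?thesis unfolding prox_obj_def by simp
qed

lemma D_convex: assumes "a \<in> D" "b \<in> D" "0 \<le> l" "l \<le> 1" shows "l *\<^sub>R a + (1 - l) *\<^sub>R b \<in> D"
proof (cases "l = 0 \<or> l = 1")
  case True then show ?thesis using assms by auto
next
  case False
  then have l: "0 < l" "l < 1" using assms by auto
  show ?thesis unfolding D_def mem_Collect_eq
  proof (intro ballI)
    fix j assume j: "j \<in> {1..m}"
    have "H j (l *\<^sub>R a + (1 - l) *\<^sub>R b) \<le> ereal l * H j a + ereal (1 - l) * H j b"
      using H_convex[OF j, unfolded ext_convex_def, rule_format, of l a b] l by simp
    also have "\<dots> = ereal (l * hr j a + (1 - l) * hr j b)"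
      using Hfin[OF assms(1) j] Hfin[OF assms(2) j] by simp
    finally have le: "H j (l *\<^sub>R a + (1 - l) *\<^sub>R b) \<le> ereal (l * hr j a + (1 - l) * hr j b)" .
    show "H j (l *\<^sub>R a + (1 - l) *\<^sub>R b) < \<infinity>"
      using le by (cases "H j (l *\<^sub>R a + (1 - l) *\<^sub>R b)") auto
  qed
qed

lemma hr_convex: assumes "a \<in> D" "b \<in> D" "0 \<le> l" "l \<le> 1" "j \<in> {1..m}"
  shows "hr j (l *\<^sub>R a + (1 - l) *\<^sub>R b) \<le> l * hr j a + (1 - l) * hr j b"
proof (cases "l = 0 \<or> l = 1")
  case True then show ?thesis by auto
next
  case False
  then have l: "0 < l" "l < 1" using assms by auto
  have "ereal (hr j (l *\<^sub>R a + (1 - l) *\<^sub>R b)) = H j (l *\<^sub>R a + (1 - l) *\<^sub>R b)"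
    using Hfin[OF D_convex[OF assms(1-4)] assms(5)] by simp
  also have "\<dots> \<le> ereal l * H j a + ereal (1 - l) * H j b"
    using H_convex[OF assms(5), unfolded ext_convex_def, rule_format, of l a b] l by simp
  also have "\<dots> = ereal (l * hr j a + (1 - l) * hr j b)"
    using Hfin[OF assms(1) assms(5)] Hfin[OF assms(2) assms(5)] by simp
  finally show ?thesis by simp
qed

lemma psr_convex: assumes "a \<in> D" "b \<in> D" "0 \<le> l" "l \<le> 1"
  shows "psr (l *\<^sub>R a + (1 - l) *\<^sub>R b) \<le> l * psr a + (1 - l) * psr b"
proof -
  have "tm j (l *\<^sub>R a + (1 - l) *\<^sub>R b) \<le> l * psr a + (1 - l) * psr b" if j: "j \<in> {1..m}" for j
  proof -
    have "tm j (l *\<^sub>R a + (1 - l) *\<^sub>R b) \<le> l * tm j a + (1 - l) * tm j b"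
      using hr_convex[OF assms j] unfolding tm_def
      by (simp add: inner_diff_right inner_add_right algebra_simps)
    also have "\<dots> \<le> l * psr a + (1 - l) * psr b"
      using tm_le_psr[OF j] assms by (intro add_mono mult_left_mono) auto
    finally show ?thesis .
  qed
  note * = this
  show ?thesis unfolding psr_def[of "l *\<^sub>R a + (1 - l) *\<^sub>R b"]
  proof (rule Max.boundedI)
    show "finite ((\<lambda>j. tm j (l *\<^sub>R a + (1 - l) *\<^sub>R b)) ` {1..m})" using ne by simp
    show "(\<lambda>j. tm j (l *\<^sub>R a + (1 - l) *\<^sub>R b)) ` {1..m} \<noteq> {}" using ne by simp
    fix y assume "y \<in> (\<lambda>j. tm j (l *\<^sub>R a + (1 - l) *\<^sub>R b)) ` {1..m}"
    then obtain j where "j \<in> {1..m}" "y = tm j (l *\<^sub>R a + (1 - l) *\<^sub>R b)" by blast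
    then show "y \<le> l * psr a + (1 - l) * psr b" using * by simp
  qed
qed

lemma psr_x: "psr x = 0"
  unfolding psr_def tm_def using ne by simp

lemma hr_cont: "j \<in> {1..m} \<Longrightarrow> continuous_on D (hr j)"
proof -
  assume j: "j \<in> {1..m}"
  have "D \<subseteq> edom (H j)" using j unfolding D_def edom_def by auto
  then have c: "continuous_on D (H j)" using H_cont[OF j] continuous_on_subset by blast
  have "\<bar>H j u\<bar> \<noteq> \<infinity>" if "u \<in> D" for u
    using Hfin[OF that j] by simp
  then have "continuous_on D (real_of_ereal \<circ> H j)"
    using continuous_on_iff_real[of D "H j"] c by blast
  then show ?thesis unfolding hr_def comp_def by simp
qed

lemma psr_cont: "continuous_on D psr"
  unfolding psr_def
proof (rule continuous_on_Max_fam[OF ne(2) ne(1)])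
  fix j assume j: "j \<in> {1..m}"
  have a: "continuous_on D (\<lambda>u. gradG j x \<bullet> (u - x))" by (intro continuous_intros)
  have "continuous_on D (\<lambda>u. gradG j x \<bullet> (u - x) + hr j u - hr j x)"
    by (intro continuous_on_diff continuous_on_add a hr_cont[OF j] continuous_on_const)
  then show "continuous_on D (tm j)" unfolding tm_def by simp
qed

lemma phr_cont: "continuous_on D phr"
proof -
  have "continuous_on D (\<lambda>u. 1 / (2 * \<alpha>) * (norm (u - x))\<^sup>2)" by (intro continuous_intros)
  then have "continuous_on D (\<lambda>u. psr u + 1 / (2 * \<alpha>) * (norm (u - x))\<^sup>2)"
    by (intro continuous_on_add psr_cont)
  then show ?thesis unfolding phr_def[abs_def] .
qed


lemma D_closed': "closed D" using D_closed D_def by simp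

lemma exists_min: "\<exists>p\<in>D. \<forall>u\<in>D. phr p \<le> phr u"
proof -
  define K where "K = D \<inter> cball x 1"
  have cK: "compact K" unfolding K_def using D_closed' by (intro closed_Int_compact) auto
  have "continuous_on K psr" using psr_cont continuous_on_subset K_def by blast
  then have "compact (psr ` K)" using cK compact_continuous_image by blast
  then have "bounded (psr ` K)" by (rule compact_imp_bounded)
  then obtain B where B: "\<And>y. y \<in> K \<Longrightarrow> norm (psr y) \<le> B" unfolding bounded_iff by auto
  define R where "R = max 1 (2 * \<alpha> * B + 1)"
  have lower: "phr u > 0" if u: "u \<in> D" "norm (u - x) > R" for u
  proof -
    define r where "r = norm (u - x)"
    have r1: "r > 1" "r > 2 * \<alpha> * B" using u R_def r_def by auto
    define w where "w = (1 / r) *\<^sub>R u + (1 - 1 / r) *\<^sub>R x"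
    have wD: "w \<in> D" unfolding w_def using r1 u xD by (intro D_convex) auto
    have "w - x = (1 / r) *\<^sub>R (u - x)" unfolding w_def by (simp add: algebra_simps)
    moreover have "u \<noteq> x" using r1 r_def by auto
    ultimately have "norm (w - x) = 1" using r1 r_def by simp
    then have "w \<in> K" using wD unfolding K_def by (simp add: dist_norm norm_minus_commute[of x w])
    then have "- B \<le> psr w" using B by force
    moreover have "psr w \<le> (1 / r) * psr u + (1 - 1 / r) * psr x"
      unfolding w_def using r1 u xD by (intro psr_convex) auto
    ultimately have "- B \<le> psr u / r" using psr_x by simp
    then have "- B * r \<le> psr u" using r1 by (simp add: field_simps)
    have "r / (2 * \<alpha>) > B" using r1 alpha_pos by (simp add: field_simps)
    then have "r * (r / (2 * \<alpha>)) > r * B" using r1 by (intro mult_strict_left_mono) auto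
    then have "r\<^sup>2 / (2 * \<alpha>) > r * B" by (simp add: power2_eq_square)
    moreover have "B * r = r * B" by simp
    moreover have "1 / (2 * \<alpha>) * r\<^sup>2 = r\<^sup>2 / (2 * \<alpha>)" by simp
    ultimately show ?thesis unfolding phr_def r_def[symmetric] using \<open>- B * r \<le> psr u\<close> by linarith
  qed
  define S where "S = D \<inter> cball x R"
  have cS: "compact S" unfolding S_def using D_closed' by (intro closed_Int_compact) auto
  have xS: "x \<in> S" unfolding S_def using xD R_def by simp
  have "continuous_on S phr" using phr_cont continuous_on_subset S_def by blast
  then obtain p where p: "p \<in> S" "\<And>y. y \<in> S \<Longrightarrow> phr p \<le> phr y"
    using continuous_attains_inf[OF cS _] xS by blast
  have "phr p \<le> 0" using p(2)[OF xS] psr_x by (simp add: phr_def)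
  have "phr p \<le> phr u" if "u \<in> D" for u
  proof (cases "norm (u - x) \<le> R")
    case True
    then have "u \<in> S" unfolding S_def using that by (simp add: dist_norm norm_minus_commute[of x u])
    then show ?thesis by (rule p(2))
  next
    case False
    then have "norm (u - x) > R" by simp
    then have "phr u > 0" by (rule lower[OF that])
    then show ?thesis using \<open>phr p \<le> 0\<close> by simp
  qed
  moreover have "p \<in> D" using p(1) unfolding S_def by blast
  ultimately show ?thesis by blast
qed

lemma unique_min:
  assumes "p \<in> D" "q \<in> D" "\<forall>u\<in>D. phr p \<le> phr u" "\<forall>u\<in>D. phr q \<le> phr u"
  shows "p = q"
proof -
  define mid where "mid = (1/2) *\<^sub>R p + (1 - 1/2) *\<^sub>R q"
  have midD: "mid \<in> D" unfolding mid_def using assms by (intro D_convex) auto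
  have ps: "psr mid \<le> (1/2) * psr p + (1 - 1/2) * psr q"
    unfolding mid_def using assms by (intro psr_convex) auto
  define a where "a = p - x"
  define b where "b = q - x"
  have hx: "(1/2::real) *\<^sub>R x + (1/2) *\<^sub>R x = x" by (simp flip: scaleR_add_left)
  have "(1/2::real) *\<^sub>R (a + b) = (1/2) *\<^sub>R p + (1/2) *\<^sub>R q - ((1/2) *\<^sub>R x + (1/2) *\<^sub>R x)"
    unfolding a_def b_def by (simp add: algebra_simps)
  then have "mid - x = (1/2) *\<^sub>R (a + b)" unfolding mid_def hx by simp
  then have "(norm (mid - x))\<^sup>2 = (1/4) * ((a + b) \<bullet> (a + b))"
    by (simp only: power2_norm_eq_inner) (simp add: inner_scaleR_left inner_scaleR_right)
  also have "\<dots> = (1/2) * (a \<bullet> a) + (1/2) * (b \<bullet> b) - (1/4) * ((a - b) \<bullet> (a - b))"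
    by (simp add: inner_add_left inner_add_right inner_diff_left inner_diff_right inner_commute algebra_simps)
  finally have nm: "(norm (mid - x))\<^sup>2 = (1/2) * (norm (p - x))\<^sup>2 + (1/2) * (norm (q - x))\<^sup>2 - (1/4) * (norm (p - q))\<^sup>2"
    unfolding a_def b_def by (simp add: power2_norm_eq_inner)
  have e: "phr p = phr q" using assms by (meson order_antisym)
  have "phr mid = psr mid + 1 / (2 * \<alpha>) * (norm (mid - x))\<^sup>2" by (simp add: phr_def)
  also have "\<dots> \<le> (1/2) * phr p + (1/2) * phr q - 1 / (2 * \<alpha>) * ((1/4) * (norm (p - q))\<^sup>2)"
    using ps unfolding nm phr_def by (simp add: algebra_simps)
  finally have "phr mid \<le> phr p - 1 / (2 * \<alpha>) * ((1/4) * (norm (p - q))\<^sup>2)" using e by simp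
  moreover have "phr p \<le> phr mid" using assms midD by blast
  ultimately have "1 / (2 * \<alpha>) * ((1/4) * (norm (p - q))\<^sup>2) \<le> 0" by simp
  show ?thesis
  proof (rule ccontr)
    assume "p \<noteq> q"
    then have "(norm (p - q))\<^sup>2 > 0" by simp
    then have "1 / (2 * \<alpha>) * ((1/4) * (norm (p - q))\<^sup>2) > 0" using alpha_pos by (intro mult_pos_pos) auto
    with \<open>1 / (2 * \<alpha>) * ((1/4) * (norm (p - q))\<^sup>2) \<le> 0\<close> show False by simp
  qed
qed

definition pp where "pp = p_alpha m gradG H \<alpha> x"

lemma pp_min: "pp \<in> D \<and> (\<forall>u\<in>D. phr pp \<le> phr u)"
proof -
  obtain p where p: "p \<in> D" "\<forall>u\<in>D. phr p \<le> phr u" using exists_min by blast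
  let ?P = "\<lambda>u. \<forall>v. prox_obj m gradG H \<alpha> x u \<le> prox_obj m gradG H \<alpha> x v"
  have Pp: "?P p"
  proof
    fix v show "prox_obj m gradG H \<alpha> x p \<le> prox_obj m gradG H \<alpha> x v"
    proof (cases "v \<in> D")
      case True
      then show ?thesis unfolding prox_in[OF True] prox_in[OF p(1)] using p(2) by simp
    next
      case False
      then show ?thesis unfolding prox_out[OF False] by simp
    qed
  qed
  have "u = p" if "?P u" for u
  proof -
    have le: "prox_obj m gradG H \<alpha> x u \<le> prox_obj m gradG H \<alpha> x v" for v using that by blast
    have uD: "u \<in> D"
    proof (rule ccontr)
      assume "u \<notin> D"
      then have "prox_obj m gradG H \<alpha> x u = \<infinity>" by (rule prox_out)
      then show False using le[of p] unfolding prox_in[OF p(1)] by simp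
    qed
    have "\<forall>v\<in>D. phr u \<le> phr v"
    proof
      fix v assume v: "v \<in> D"
      have "ereal (phr u) \<le> ereal (phr v)" using le[of v] unfolding prox_in[OF uD] prox_in[OF v] .
      then show "phr u \<le> phr v" by simp
    qed
    then show ?thesis using unique_min[OF uD p(1)] p(2) by blast
  qed
  then have "pp = p" unfolding pp_def p_alpha_def by (rule the_equality[where P="?P", OF Pp])
  then show ?thesis using p by simp
qed

lemma key:
  assumes "0 < \<gamma>" "\<gamma> < 2 / \<alpha>"
  shows "psr pp + \<gamma> / 2 * (norm (pp - x))\<^sup>2 \<le> 0"
proof -
  define q where "q = (norm (pp - x))\<^sup>2"
  define l where "l = (2 - \<gamma> * \<alpha>) / 2"
  have ga: "\<gamma> * \<alpha> < 2" using assms alpha_pos by (simp add: field_simps)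
  have l: "0 < l" "l < 1" unfolding l_def using ga assms alpha_pos by auto
  define y where "y = l *\<^sub>R x + (1 - l) *\<^sub>R pp"
  have ppD: "pp \<in> D" using pp_min by blast
  have yD: "y \<in> D" unfolding y_def using l ppD xD by (intro D_convex) auto
  have "phr pp \<le> phr y" using pp_min yD by blast
  moreover have "psr y \<le> l * psr x + (1 - l) * psr pp" unfolding y_def using l ppD xD by (intro psr_convex) auto
  moreover have "y - x = (1 - l) *\<^sub>R (pp - x)" unfolding y_def by (simp add: algebra_simps)
  then have "(norm (y - x))\<^sup>2 = (1 - l)\<^sup>2 * q" unfolding q_def using l by (simp add: power_mult_distrib)
  ultimately have "psr pp + q / (2 * \<alpha>) \<le> (1 - l) * psr pp + (1 - l)\<^sup>2 * q / (2 * \<alpha>)"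
    unfolding phr_def q_def using psr_x by (simp add: q_def)
  moreover have "(1 - l) * psr pp = psr pp - l * psr pp" by (simp add: algebra_simps)
  ultimately have A: "l * psr pp \<le> (1 - l)\<^sup>2 * q / (2 * \<alpha>) - q / (2 * \<alpha>)" by linarith
  have "(1 - l)\<^sup>2 * q / (2 * \<alpha>) - q / (2 * \<alpha>) = l * ((l - 2) * q / (2 * \<alpha>))"
    by (simp add: power2_eq_square diff_divide_distrib[symmetric] algebra_simps)
  with A have "l * psr pp \<le> l * ((l - 2) * q / (2 * \<alpha>))" by simp
  then have "psr pp \<le> (l - 2) * q / (2 * \<alpha>)" using l mult_le_cancel_left_pos by blast
  moreover have "(l - 2) * q / (2 * \<alpha>) + \<gamma> / 2 * q = ((\<gamma> * \<alpha> - 2) / (4 * \<alpha>)) * q"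
    unfolding l_def using alpha_pos by (simp add: field_simps)
  moreover have "((\<gamma> * \<alpha> - 2) / (4 * \<alpha>)) * q \<le> 0" using ga alpha_pos unfolding q_def
    by (intro mult_nonpos_nonneg divide_nonpos_pos) auto
  ultimately show ?thesis unfolding q_def by linarith
qed

end

context prox_setup begin

lemma step_ok:
  fixes G :: "nat \<Rightarrow> 'a \<Rightarrow> real"
  assumes gam: "0 < \<gamma>" "\<gamma> < 2 / \<alpha>" and s: "0 < s" "s \<le> 1"
    and dt: "\<forall>j\<in>{1..m}. descent_test G gradG \<gamma> j x (pp - x) s"
  shows "F_le m G H (x + s *\<^sub>R (pp - x)) x \<and> x + s *\<^sub>R (pp - x) \<in> D"
proof -
  define d where "d = pp - x"
  define q where "q = (norm d)\<^sup>2"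
  have ppD: "pp \<in> D" using pp_min by blast
  have yeq: "x + s *\<^sub>R d = s *\<^sub>R pp + (1 - s) *\<^sub>R x" unfolding d_def by (simp add: algebra_simps)
  have yD: "x + s *\<^sub>R d \<in> D" unfolding yeq using ppD xD s by (intro D_convex) auto
  have K: "psr pp + \<gamma> / 2 * q \<le> 0" using key[OF gam] unfolding q_def d_def .
  have "Fval G H j (x + s *\<^sub>R d) \<le> Fval G H j x" if j: "j \<in> {1..m}" for j
  proof -
    have h: "hr j (x + s *\<^sub>R d) \<le> s * hr j pp + (1 - s) * hr j x"
      unfolding yeq using hr_convex[OF ppD xD _ _ j, of s] s by simp
    have g: "G j (x + s *\<^sub>R d) \<le> G j x + s * (gradG j x \<bullet> d) + s * (\<gamma> / 2) * q"
      using dt j unfolding descent_test_def d_def q_def by blast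
    have t: "gradG j x \<bullet> d + hr j pp - hr j x \<le> psr pp"
      using tm_le_psr[OF j, of pp] unfolding tm_def d_def .
    have "s * (gradG j x \<bullet> d + hr j pp - hr j x + \<gamma> / 2 * q) \<le> 0"
      using t K s by (intro mult_nonneg_nonpos) auto
    then have "G j (x + s *\<^sub>R d) + hr j (x + s *\<^sub>R d) \<le> G j x + hr j x"
      using h g by (simp add: algebra_simps)
    then show ?thesis unfolding Fval_def using Hfin[OF yD j] Hfin[OF xD j] by simp
  qed
  then show ?thesis using yD unfolding F_le_def d_def by blast
qed

lemma step_lemma:
  fixes G :: "nat \<Rightarrow> 'a \<Rightarrow> real" and L :: "nat \<Rightarrow> real"
  assumes G_grad: "\<And>j y. j \<in> {1..m} \<Longrightarrow> (G j has_derivative (\<lambda>h. gradG j y \<bullet> h)) (at y)"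
    and L_pos: "\<And>j. j \<in> {1..m} \<Longrightarrow> L j > 0"
    and L_lip: "\<And>j y z. j \<in> {1..m} \<Longrightarrow> norm (gradG j y - gradG j z) \<le> L j * norm (y - z)"
    and gam: "0 < \<gamma>" "\<gamma> < 2 / \<alpha>"
    and taus: "0 < \<tau>1" "\<tau>1 < \<tau>2" "\<tau>2 < 1"
    and step: "mpg_step3 m G gradG H \<alpha> \<gamma> \<tau>1 \<tau>2 x tk"
  shows "min 1 (\<tau>1 * \<gamma> / Max (L ` {1..m})) \<le> tk \<and> F_le m G H (x + tk *\<^sub>R (pp - x)) x"
proof -
  define d where "d = pp - x"
  define Lm where "Lm = Max (L ` {1..m})"
  define c where "c = \<gamma> / Lm"
  have Lj: "L j \<le> Lm" if "j \<in> {1..m}" for j unfolding Lm_def using that ne by simp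
  have Lm_pos: "Lm > 0" using Lj[of 1] L_pos[of 1] m_pos by force
  have c_pos: "c > 0" unfolding c_def using Lm_pos gam by simp
  have tmin: "min 1 (\<tau>1 * \<gamma> / Max (L ` {1..m})) = min 1 (\<tau>1 * c)" unfolding c_def Lm_def by simp
  have dt: "descent_test G gradG \<gamma> j x d r" if j: "j \<in> {1..m}" and r: "0 < r" "r \<le> c" for j r
  proof -
    have "G j (x + r *\<^sub>R d) \<le> G j x + r * (gradG j x \<bullet> d) + L j * r\<^sup>2 / 2 * (norm d)\<^sup>2"
      by (rule descent_lip[OF G_grad[OF j] L_lip[OF j]]) (use r in simp)
    moreover have "L j * r \<le> \<gamma>"
    proof -
      have "L j * r \<le> Lm * r" using Lj[OF j] r by (intro mult_right_mono) auto
      also have "\<dots> \<le> Lm * c" using r Lm_pos by simp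
      also have "\<dots> = \<gamma>" unfolding c_def using Lm_pos by simp
      finally show ?thesis .
    qed
    then have "L j * r\<^sup>2 / 2 * (norm d)\<^sup>2 \<le> r * (\<gamma> / 2) * (norm d)\<^sup>2"
    proof -
      have "L j * r\<^sup>2 / 2 * (norm d)\<^sup>2 = r * ((L j * r) / 2 * (norm d)\<^sup>2)" by (simp add: power2_eq_square)
      also have "\<dots> \<le> r * (\<gamma> / 2 * (norm d)\<^sup>2)"
        using \<open>L j * r \<le> \<gamma>\<close> r by (intro mult_left_mono mult_right_mono) auto
      finally show ?thesis by simp
    qed
    ultimately show ?thesis unfolding descent_test_def by linarith
  qed
  from step obtain js s where js: "js \<in> {1..m}"
    and bt: "backtrack (descent_test G gradG \<gamma> js x d) \<tau>1 \<tau>2 1 s"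
    and cases: "(F_le m G H (x + s *\<^sub>R d) x \<and> tk = s) \<or>
           (\<not> F_le m G H (x + s *\<^sub>R d) x \<and>
            (\<exists>t'. \<tau>1 * s \<le> t' \<and> t' \<le> \<tau>2 * s \<and>
               backtrack (\<lambda>t. \<forall>j\<in>{1..m}. descent_test G gradG \<gamma> j x d t) \<tau>1 \<tau>2 t' tk))"
    unfolding mpg_step3_def Let_def pp_def[symmetric] d_def by blast
  have B1: "min 1 (\<tau>1 * c) \<le> s \<and> 0 < s \<and> s \<le> 1"
    using backtrack_bound[OF bt taus(1) taus(3), of c] taus dt[OF js] by auto
  show ?thesis
  proof (cases "F_le m G H (x + s *\<^sub>R d) x \<and> tk = s")
    case True
    then show ?thesis using B1 tmin d_def by simp
  next
    case False
    with cases obtain t' where nF: "\<not> F_le m G H (x + s *\<^sub>R d) x" and t': "\<tau>1 * s \<le> t'" "t' \<le> \<tau>2 * s"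
      and bt2: "backtrack (\<lambda>t. \<forall>j\<in>{1..m}. descent_test G gradG \<gamma> j x d t) \<tau>1 \<tau>2 t' tk" by blast
    have "c < s"
    proof (rule ccontr)
      assume "\<not> c < s"
      then have "\<forall>j\<in>{1..m}. descent_test G gradG \<gamma> j x (pp - x) s" using dt B1 d_def by auto
      then have "F_le m G H (x + s *\<^sub>R d) x" using step_ok[OF gam, of s] B1 d_def by auto
      with nF show False by simp
    qed
    have t'pos: "0 < t'" using t' taus B1 by (smt (verit) mult_pos_pos)
    have B2: "min t' (\<tau>1 * c) \<le> tk \<and> 0 < tk \<and> tk \<le> t' \<and> (\<forall>j\<in>{1..m}. descent_test G gradG \<gamma> j x d tk)"
      using backtrack_bound[OF bt2 taus(1) taus(3), of c] taus dt t'pos by auto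
    have "\<tau>1 * c \<le> \<tau>1 * s" using \<open>c < s\<close> taus by simp
    then have "\<tau>1 * c \<le> t'" using t' by linarith
    then have lo: "\<tau>1 * c \<le> tk" using B2 by linarith
    have "\<tau>2 * s \<le> 1 * s" using taus B1 by (intro mult_right_mono) auto
    then have "tk \<le> 1" using B2 t' B1 by linarith
    then have "F_le m G H (x + tk *\<^sub>R (pp - x)) x" using step_ok[OF gam, of tk] B2 d_def by auto
    then show ?thesis using lo tmin by simp
  qed
qed

end

lemma step_glob:
  fixes G :: "nat \<Rightarrow> 'a::euclidean_space \<Rightarrow> real" and L :: "nat \<Rightarrow> real"
  assumes PS: "prox_setup m H \<alpha> z"
    and G_grad: "\<And>j y. j \<in> {1..m} \<Longrightarrow> (G j has_derivative (\<lambda>h. gradG j y \<bullet> h)) (at y)"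
    and L_pos: "\<And>j. j \<in> {1..m} \<Longrightarrow> L j > 0"
    and L_lip: "\<And>j y z. j \<in> {1..m} \<Longrightarrow> norm (gradG j y - gradG j z) \<le> L j * norm (y - z)"
    and gam: "0 < \<gamma>" "\<gamma> < 2 / \<alpha>"
    and taus: "0 < \<tau>1" "\<tau>1 < \<tau>2" "\<tau>2 < 1"
    and step: "mpg_step3 m G gradG H \<alpha> \<gamma> \<tau>1 \<tau>2 z tk"
  shows "min 1 (\<tau>1 * \<gamma> / Max (L ` {1..m})) \<le> tk \<and> F_le m G H (z + tk *\<^sub>R (p_alpha m gradG H \<alpha> z - z)) z"
proof -
  interpret prox_setup m gradG H \<alpha> z using PS by (simp add: prox_setup_def)
  show ?thesis using step_lemma[OF G_grad L_pos L_lip gam taus step] unfolding pp_def by blast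
qed

lemma domF_eq: "domF m G H = {u. \<forall>j\<in>{1..m}. H j u < \<infinity>}"
proof -
  have "(ereal a + b < \<infinity>) = (b < \<infinity>)" for a and b :: ereal by (cases b) auto
  then show ?thesis unfolding domF_def Fval_def by simp
qed

theorem mainTheorem5:
  fixes m :: nat
    and G :: "nat \<Rightarrow> real^'n \<Rightarrow> real"
    and gradG :: "nat \<Rightarrow> real^'n \<Rightarrow> real^'n"
    and H :: "nat \<Rightarrow> real^'n \<Rightarrow> ereal"
    and L :: "nat \<Rightarrow> real"
    and \<alpha> \<gamma> \<tau>1 \<tau>2 :: real
    and x :: "nat \<Rightarrow> real^'n"
    and t :: "nat \<Rightarrow> real"
  assumes m_pos: "1 \<le> m"
    and G_grad: "\<And>j y. j \<in> {1..m} \<Longrightarrow> (G j has_derivative (\<lambda>h. gradG j y \<bullet> h)) (at y)"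
    and G_C1: "\<And>j. j \<in> {1..m} \<Longrightarrow> continuous_on UNIV (gradG j)"
    and G_convex: "\<And>j. j \<in> {1..m} \<Longrightarrow> convex_on UNIV (G j)"
    and H_proper: "\<And>j. j \<in> {1..m} \<Longrightarrow> ext_proper (H j)"
    and H_convex: "\<And>j. j \<in> {1..m} \<Longrightarrow> ext_convex (H j)"
    and H_cont: "\<And>j. j \<in> {1..m} \<Longrightarrow> continuous_on (edom (H j)) (H j)"
    and dom_ne: "domF m G H \<noteq> {}"
    and dom_closed: "closed (domF m G H)"
    and L_pos: "\<And>j. j \<in> {1..m} \<Longrightarrow> L j > 0"
    and L_lip: "\<And>j y z. j \<in> {1..m} \<Longrightarrow> norm (gradG j y - gradG j z) \<le> L j * norm (y - z)"
    and x0: "x 0 \<in> domF m G H"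
    and alpha_pos: "\<alpha> > 0"
    and gamma: "0 < \<gamma>" "\<gamma> < 2 / \<alpha>"
    and taus: "0 < \<tau>1" "\<tau>1 < \<tau>2" "\<tau>2 < 1"
    and run: "\<And>k. (\<forall>i\<le>k. theta_alpha m gradG H \<alpha> (x i) \<noteq> 0) \<Longrightarrow>
               mpg_step3 m G gradG H \<alpha> \<gamma> \<tau>1 \<tau>2 (x k) (t k) \<and>
               x (Suc k) = x k + t k *\<^sub>R (p_alpha m gradG H \<alpha> (x k) - x k)"
  shows "\<forall>k. (\<forall>i\<le>k. theta_alpha m gradG H \<alpha> (x i) \<noteq> 0) \<longrightarrow>
           t k \<ge> min 1 (\<tau>1 * \<gamma> / Max (L ` {1..m}))"
proof -
  have PS: "prox_setup m H \<alpha> z" if z: "z \<in> domF m G H" for z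
    using m_pos H_proper H_convex H_cont dom_closed z alpha_pos unfolding domF_eq
    by unfold_locales auto
  have dom: "(\<forall>i<k. theta_alpha m gradG H \<alpha> (x i) \<noteq> 0) \<longrightarrow> x k \<in> domF m G H" for k
  proof (induction k)
    case 0
    then show ?case using x0 by simp
  next
    case (Suc k)
    show ?case
    proof
      assume th: "\<forall>i<Suc k. theta_alpha m gradG H \<alpha> (x i) \<noteq> 0"
      then have xk: "x k \<in> domF m G H" using Suc by simp
      have "\<forall>i\<le>k. theta_alpha m gradG H \<alpha> (x i) \<noteq> 0" using th by simp
      note r = run[OF this]
      have Fle: "F_le m G H (x (Suc k)) (x k)"
        using step_glob[OF PS[OF xk] G_grad L_pos L_lip gamma taus conjunct1[OF r]] conjunct2[OF r] by simp
      show "x (Suc k) \<in> domF m G H"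
        unfolding domF_def mem_Collect_eq
      proof
        fix j assume j: "j \<in> {1..m}"
        have "Fval G H j (x (Suc k)) \<le> Fval G H j (x k)" using Fle j unfolding F_le_def by blast
        moreover have "Fval G H j (x k) < \<infinity>" using xk j unfolding domF_def by blast
        ultimately show "Fval G H j (x (Suc k)) < \<infinity>" by (rule order.strict_trans1)
      qed
    qed
  qed
  show ?thesis
  proof (intro allI impI)
    fix k assume th: "\<forall>i\<le>k. theta_alpha m gradG H \<alpha> (x i) \<noteq> 0"
    then have xk: "x k \<in> domF m G H" using dom by simp
    show "min 1 (\<tau>1 * \<gamma> / Max (L ` {1..m})) \<le> t k"
      using step_glob[OF PS[OF xk] G_grad L_pos L_lip gamma taus conjunct1[OF run[OF th]]] by simp
  qed
qed

end
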